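(* Let $q\ge2$ and let $V'\subseteq\mathbb Z^2$ be $\mathbb Z^2$-periodic with cell $Q_0$ and $V_0=V'\cap Q_0$. There exists $C>0$ depending only on $q$ and $V'$ such that for every $\varepsilon>0$, with $V:=\varepsilon V'$, and every $u\in H^1(\mathcal G_\varepsilon)$, $\left|\varepsilon\,\frac{2\,\#(\mathbb Z^2\cap Q_0)}{\#V_0}\sum_{\mathrm v\in V}|u(\mathrm v)|^q-\|u\|_{L^q(\mathcal G_\varepsilon)}^q\right|\le C\,\varepsilon\,\|u\|_{L^{2(q-1)}(\mathcal G_\varepsilon)}^{q-1}\|u'\|_{L^2(\mathcal G_\varepsilon)}$.
   Context: For $\varepsilon>0$, $\mathcal G_\varepsilon$ is the metric graph embedded in $\mathbb R^2$ with vertex set $\varepsilon\mathbb Z^2$ and an edge (a segment of length $\varepsilon$) joining every pair of vertices at Euclidean distance $\varepsilon$. $H^1(\mathcal G_\varepsilon)$ is the space of continuous $u:\mathcal G_\varepsilon\to\mathbb R$ whose restriction to each edge is in $H^1$ of that edge with $\|u\|_{L^2(\mathcal G_\varepsilon)}^2+\|u'\|_{L^2(\mathcal G_\varepsilon)}^2<\infty$; $L^r$ norms on $\mathcal G_\varepsilon$ are sums over edges of one-dimensional integrals. A set $V'\subset\mathbb Z^2$ is $\mathbb Z^2$-periodic if there exist linearly independent $\vec v_1,\vec v_2\in\mathbb Z^2$ with $V'=V'+k_1\vec v_1+k_2\vec v_2$ for all $k_1,k_2\in\mathbb Z$. For $(i,j)\in\mathbb Z^2$, $L^1_{i,j}$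 denotes the union of the vertex $(i,j)$ and the two open edges of $\mathcal G_1$ from $(i,j)$ to $(i+1,j)$ and to $(i,j+1)$. The cell is $Q_0:=\bigcup_{n\in I}L^1_{i_n,j_n}$, where $\{(i_n,j_n)\}_{n\in I}$ is a finite complete system of representatives of $\mathbb Z^2$ modulo the lattice $\mathbb Z\vec v_1+\mathbb Z\vec v_2$ (so the translates of $Q_0$ by the lattice are pairwise disjoint and cover $\mathcal G_1$), and $V_0:=V'\cap Q_0$. *)

theory Defs
  imports "HOL-Analysis.Analysis"
begin

type_synonym zpt = "int \<times> int"

definition zadd :: "zpt \<Rightarrow> zpt \<Rightarrow> zpt" where
  "zadd p r = (fst p + fst r, snd p + snd r)"

definition zscale :: "int \<Rightarrow> zpt \<Rightarrow> zpt" where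
  "zscale k p = (k * fst p, k * snd p)"

definition lin_indep2 :: "zpt \<Rightarrow> zpt \<Rightarrow> bool" where
  "lin_indep2 v1 v2 \<longleftrightarrow>
     (\<forall>a b :: real. a * of_int (fst v1) + b * of_int (fst v2) = 0 \<and>
                    a * of_int (snd v1) + b * of_int (snd v2) = 0 \<longrightarrow> a = 0 \<and> b = 0)"

definition lat_shift :: "zpt \<Rightarrow> zpt \<Rightarrow> int \<Rightarrow> int \<Rightarrow> zpt \<Rightarrow> zpt" where
  "lat_shift v1 v2 k1 k2 p = zadd p (zadd (zscale k1 v1) (zscale k2 v2))"

definition periodic_wrt :: "zpt set \<Rightarrow> zpt \<Rightarrow> zpt \<Rightarrow> bool" where
  "periodic_wrt V' v1 v2 \<longleftrightarrow> lin_indep2 v1 v2 \<and>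
     (\<forall>k1 k2. V' = lat_shift v1 v2 k1 k2 ` V')"

definition complete_reps :: "zpt \<Rightarrow> zpt \<Rightarrow> zpt set \<Rightarrow> bool" where
  "complete_reps v1 v2 R \<longleftrightarrow> finite R \<and>
     (\<forall>p. \<exists>r\<in>R. \<exists>k1 k2. p = lat_shift v1 v2 k1 k2 r) \<and>
     (\<forall>r\<in>R. \<forall>r'\<in>R. \<forall>k1 k2. r' = lat_shift v1 v2 k1 k2 r \<longrightarrow> r' = r)"

definition L1 :: "zpt \<Rightarrow> (real \<times> real) set" where
  "L1 p = {(of_int (fst p), of_int (snd p))}
        \<union> {(of_int (fst p) + t, of_int (snd p)) | t. 0 < t \<and> t < 1}
        \<union> {(of_int (fst p), of_int (snd p) + t) | t. 0 < t \<and> t < 1}"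

definition cellQ0 :: "zpt set \<Rightarrow> (real \<times> real) set" where
  "cellQ0 R = (\<Union>p\<in>R. L1 p)"

text \<open>Z^2 \<inter> Q_0 and V_0 = V' \<inter> Q_0 (as sets of integer points).\<close>
definition int_pts :: "(real \<times> real) set \<Rightarrow> zpt set" where
  "int_pts S = {p. (of_int (fst p), of_int (snd p)) \<in> S}"

text \<open>Edges of G_eps are indexed by (p, b): the edge starts at eps*p and goes in direction
  (1,0) if b, and (0,1) otherwise. It is parametrised by arclength t \<in> [0, eps].\<close>
type_synonym edge = "zpt \<times> bool"

definition edge_pt :: "real \<Rightarrow> edge \<Rightarrow> real \<Rightarrow> real \<times> real" where
  "edge_pt eps e t =
     (if snd e then (eps * of_int (fst (fst e)) + t, eps * of_int (snd (fst e)))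
      else (eps * of_int (fst (fst e)), eps * of_int (snd (fst e)) + t))"

definition vertex_pt :: "real \<Rightarrow> zpt \<Rightarrow> real \<times> real" where
  "vertex_pt eps p = (eps * of_int (fst p), eps * of_int (snd p))"

definition H1_edge :: "real \<Rightarrow> (real \<Rightarrow> real) \<Rightarrow> (real \<Rightarrow> real) \<Rightarrow> bool" where
  "H1_edge eps f g \<longleftrightarrow> g \<in> borel_measurable lborel \<and>
     set_integrable lborel {0..eps} (\<lambda>t. (g t)\<^sup>2) \<and>
     (\<forall>x\<in>{0..eps}. f x = f 0 + (LBINT t:{0..x}. g t))"

text \<open>Continuity of u on G_eps is built in since u is a single function of the point and each
  edge restriction is absolutely continuous up to the endpoints.\<close>
definition H1_graph :: "real \<Rightarrow> (real \<times> real \<Rightarrow> real) \<Rightarrow> (edge \<Rightarrow> real \<Rightarrow> real) \<Rightarrow> bool" where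
  "H1_graph eps u g \<longleftrightarrow>
     (\<forall>e. H1_edge eps (\<lambda>t. u (edge_pt eps e t)) (g e)) \<and>
     (\<integral>\<^sup>+ e. (\<integral>\<^sup>+ t\<in>{0..eps}. ennreal ((u (edge_pt eps e t))\<^sup>2) \<partial>lborel) \<partial>count_space UNIV) < \<infinity> \<and>
     (\<integral>\<^sup>+ e. (\<integral>\<^sup>+ t\<in>{0..eps}. ennreal ((g e t)\<^sup>2) \<partial>lborel) \<partial>count_space UNIV) < \<infinity>"

definition Lpow :: "real \<Rightarrow> (real \<times> real \<Rightarrow> real) \<Rightarrow> real \<Rightarrow> real" where
  "Lpow eps u r = infsum (\<lambda>e. LBINT t:{0..eps}. \<bar>u (edge_pt eps e t)\<bar> powr r) UNIV"

definition deriv_L2sq :: "real \<Rightarrow> (edge \<Rightarrow> real \<Rightarrow> real) \<Rightarrow> real" where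
  "deriv_L2sq eps g = infsum (\<lambda>e. LBINT t:{0..eps}. (g e t)\<^sup>2) UNIV"

end

theory Submission
  imports Defs
begin


lemma powr_mvt:
  fixes a b q :: real
  assumes "a \<ge> 0" "b \<ge> 0" "q \<ge> 1"
  shows "\<bar>a powr q - b powr q\<bar> \<le> q * (max a b) powr (q - 1) * \<bar>a - b\<bar>"
proof -
  have main: "y powr q - x powr q \<le> q * y powr (q - 1) * (y - x)" if "0 \<le> x" "x \<le> y" for x y :: real
  proof (cases "x = 0")
    case True
    show ?thesis
    proof (cases "y = 0")
      case True then show ?thesis using \<open>x = 0\<close> by simp
    next
      case False
      then have "y > 0" using that by simp
      have "y powr q = y powr (q - 1) * y" using \<open>y>0\<close> by (simp add: powr_diff)
      also have "\<dots> \<le> q * y powr (q - 1) * y" using assms \<open>y>0\<close> by simp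
      finally show ?thesis using True by simp
    qed
  next
    case False
    then have x0: "x > 0" using that by simp
    show ?thesis
    proof (cases "x = y")
      case True then show ?thesis by simp
    next
      case False
      then have "x < y" using that by simp
      have "\<exists>z. x < z \<and> z < y \<and> y powr q - x powr q = (y - x) * (q * z powr (q - 1))"
        apply (rule MVT2[OF \<open>x < y\<close>])
        using x0 by (auto intro!: derivative_eq_intros)
      then obtain z where z: "x < z" "z < y" "y powr q - x powr q = (y - x) * (q * z powr (q - 1))" by blast
      have "z powr (q - 1) \<le> y powr (q - 1)"
        using z x0 assms by (intro powr_mono2) auto
      then have "(y - x) * (q * z powr (q - 1)) \<le> (y - x) * (q * y powr (q - 1))"
        using \<open>x<y\<close> assms by (intro mult_left_mono) auto
      then show ?thesis using z by (simp add: algebra_simps)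
    qed
  qed
  show ?thesis
  proof (cases "b \<le> a")
    case True
    have "0 \<le> a powr q - b powr q" using True assms by (intro diff_ge_0_iff_ge[THEN iffD2] powr_mono2) auto
    then show ?thesis using main[OF assms(2) True] True by (simp add: max_def)
  next
    case False
    have "0 \<le> b powr q - a powr q" using False assms by (intro diff_ge_0_iff_ge[THEN iffD2] powr_mono2) auto
    then show ?thesis using main[OF assms(1)] False by (simp add: max_def abs_minus_commute)
  qed
qed

lemma cs_trick:
  fixes S X Y :: real
  assumes "X \<ge> 0" "Y \<ge> 0" "\<And>l. l > 0 \<Longrightarrow> S \<le> (l * X + Y / l) / 2"
  shows "S \<le> sqrt X * sqrt Y"
proof (cases "X > 0 \<and> Y > 0")
  case True
  define l where "l = sqrt Y / sqrt X"
  have l: "l > 0" using True by (simp add: l_def)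
  have sX: "sqrt X * sqrt X = X" using True by simp
  have sY: "sqrt Y * sqrt Y = Y" using True by simp
  have sp: "sqrt X > 0" "sqrt Y > 0" using True by auto
  have "l * X = sqrt X * sqrt Y" unfolding l_def using sp
    by (subst sX[symmetric]) (simp add: field_simps)
  moreover have "Y / l = sqrt X * sqrt Y" unfolding l_def using sp
    by (subst sY[symmetric]) (simp add: field_simps)
  ultimately show ?thesis using assms(3)[OF l] by simp
next
  case False
  show ?thesis
  proof (rule ccontr)
    assume "\<not> ?thesis"
    then have S: "S > 0" using False assms by auto
    show False
    proof (cases "X = 0")
      case True
      have "S \<le> (Y / ((Y + 1) / S)) / 2" using assms(3)[of "(Y+1)/S"] S assms True by simp
      also have "\<dots> = S * (Y / (Y + 1)) / 2" using S assms by (simp add: field_simps)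
      also have "\<dots> < S"
      proof -
        have h: "Y / (Y + 1) < 2" using assms by (simp add: divide_less_eq)
        have "S * (Y / (Y + 1)) < S * 2" by (rule mult_strict_left_mono[OF h S])
        moreover have "\<And>p::real. p < S*2 \<Longrightarrow> p/2 < S" by simp
        ultimately show ?thesis by blast
      qed
      finally show False by simp
    next
      case False
      then have "Y = 0" using \<open>\<not> (X > 0 \<and> Y > 0)\<close> assms by auto
      have "S \<le> (S / (X + 1) * X) / 2" using assms(3)[of "S/(X+1)"] S assms \<open>Y = 0\<close> by simp
      also have "\<dots> = S * (X / (X + 1)) / 2" using S assms by (simp add: field_simps)
      also have "\<dots> < S"
      proof -
        have h: "X / (X + 1) < 2" using assms by (simp add: divide_less_eq)
        have "S * (X / (X + 1)) < S * 2" by (rule mult_strict_left_mono[OF h S])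
        moreover have "\<And>p::real. p < S*2 \<Longrightarrow> p/2 < S" by simp
        ultimately show ?thesis by blast
      qed
      finally show False by simp
    qed
  qed
qed

lemma amgm_l:
  fixes a b l :: real
  assumes "l > 0"
  shows "a * b \<le> (l * a^2 + b^2 / l) / 2"
proof -
  have "0 \<le> (l * a - b)^2 / l" using assms by simp
  also have "(l * a - b)^2 / l = l * a^2 + b^2 / l - 2 * a * b"
    using assms by (simp add: power2_eq_square field_simps)
  finally show ?thesis by simp
qed



lemma prod_abs_int:
  fixes h g :: "real \<Rightarrow> real"
  assumes "continuous_on {a..b} h" "g absolutely_integrable_on {a..b}"
  shows "(\<lambda>x. h x * \<bar>g x\<bar>) integrable_on {a..b}"
proof -
  have "(\<lambda>x. \<bar>g x\<bar>) absolutely_integrable_on {a..b}"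
    using assms(2) by (simp add: absolutely_integrable_abs_iff absolutely_integrable_on_def)
  moreover have "h \<in> borel_measurable (lebesgue_on {a..b})"
    using assms(1) by (intro continuous_imp_measurable_on_sets_lebesgue) auto
  moreover have "bounded (h ` {a..b})"
    using assms(1) by (intro compact_imp_bounded compact_continuous_image) auto
  ultimately have "(\<lambda>x. h x * \<bar>g x\<bar>) absolutely_integrable_on {a..b}"
    by (intro absolutely_integrable_bounded_measurable_product_real) auto
  then show ?thesis using set_lebesgue_integral_eq_integral(1) by blast
qed

lemma edge_basic:
  fixes f g :: "real \<Rightarrow> real"
  assumes eps: "eps > 0" and H: "H1_edge eps f g"
  shows "g absolutely_integrable_on {0..eps}"
    and "(\<lambda>t. (g t)^2) integrable_on {0..eps}"
    and "(LBINT t:{0..eps}. (g t)^2) = integral {0..eps} (\<lambda>t. (g t)^2)"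
    and "\<And>x. x \<in> {0..eps} \<Longrightarrow> f x = f 0 + integral {0..x} g"
    and "continuous_on {0..eps} f"
proof -
  have gm: "g \<in> borel_measurable lborel" and g2: "set_integrable lborel {0..eps} (\<lambda>t. (g t)\<^sup>2)"
    and fx0: "\<forall>x\<in>{0..eps}. f x = f 0 + (LBINT t:{0..x}. g t)"
    using H unfolding H1_edge_def by blast+
  have fx: "f x = f 0 + (LBINT t:{0..x}. g t)" if "x\<in>{0..eps}" for x using fx0 that by blast
  have one: "set_integrable lborel {0..eps} (\<lambda>t. 1::real)"
    unfolding set_integrable_def by (rule borel_integrable_compact) auto
  have sg: "set_integrable lborel {0..eps} g"
  proof (rule set_integrable_bound[OF set_integral_add(1)[OF one g2]])
    show "set_borel_measurable lborel {0..eps} g"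
      unfolding set_borel_measurable_def using gm by measurable
    show "AE x in lborel. x \<in> {0..eps} \<longrightarrow> norm (g x) \<le> norm (1 + (g x)\<^sup>2)"
    proof (intro AE_I2 impI)
      fix x
      have "0 \<le> (\<bar>g x\<bar> - 1)^2" by simp
      also have "(\<bar>g x\<bar> - 1)^2 = (g x)^2 - 2 * \<bar>g x\<bar> + 1"
        by (simp add: power2_eq_square algebra_simps abs_mult_self_eq)
      finally have "\<bar>g x\<bar> \<le> 1 + (g x)^2" by simp
      then show "norm (g x) \<le> norm (1 + (g x)\<^sup>2)" by simp
    qed
  qed
  have sga: "set_integrable lborel {0..eps} (\<lambda>t. \<bar>g t\<bar>)" using sg by (rule set_integrable_abs)
  show "g absolutely_integrable_on {0..eps}"
    unfolding absolutely_integrable_on_def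
    using set_borel_integral_eq_integral(1)[OF sg] set_borel_integral_eq_integral(1)[OF sga] by simp
  show "(\<lambda>t. (g t)^2) integrable_on {0..eps}" using set_borel_integral_eq_integral(1)[OF g2] .
  show "(LBINT t:{0..eps}. (g t)^2) = integral {0..eps} (\<lambda>t. (g t)^2)"
    using set_borel_integral_eq_integral(2)[OF g2] .
  have fx': "f x = f 0 + integral {0..x} g" if "x \<in> {0..eps}" for x
  proof -
    have "set_integrable lborel {0..x} g" using that by (intro set_integrable_subset[OF sg]) auto
    then show ?thesis using fx[OF that] set_borel_integral_eq_integral(2) by metis
  qed
  then show "\<And>x. x \<in> {0..eps} \<Longrightarrow> f x = f 0 + integral {0..x} g" .
  have "continuous_on {0..eps} (\<lambda>x. f 0 + integral {0..x} g)"
    using set_borel_integral_eq_integral(1)[OF sg]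
    by (intro continuous_intros indefinite_integral_continuous_1)
  then show "continuous_on {0..eps} f"
  proof (rule continuous_on_eq)
    fix x assume "x \<in> {0..eps}"
    from fx'[OF this] show "f 0 + integral {0..x} g = f x" by (rule sym)
  qed
qed



lemma edge_var_delta:
  fixes f g H :: "real \<Rightarrow> real"
  assumes eps: "eps > 0" and q: "q \<ge> 2" and cf: "continuous_on {0..eps} f"
    and ga: "g absolutely_integrable_on {0..eps}"
    and fx: "\<And>x. x \<in> {0..eps} \<Longrightarrow> f x = f 0 + integral {0..x} g"
    and H_def: "H = (\<lambda>y. \<bar>f y\<bar> powr (q - 1))"
    and ab: "0 \<le> a" "a \<le> b" "b \<le> eps" and dl: "dl > 0"
  shows "\<bar>\<bar>f b\<bar> powr q - \<bar>f a\<bar> powr q\<bar> \<le> q * integral {a..b} (\<lambda>y. (H y + dl) * \<bar>g y\<bar>)"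
proof -
  define F where "F = (\<lambda>y. \<bar>f y\<bar> powr q)"
  define phi where "phi = (\<lambda>y. (H y + dl) * \<bar>g y\<bar>)"
  have Hc: "continuous_on {0..eps} H"
    unfolding H_def using q cf by (intro continuous_on_powr' continuous_intros) auto
  have phii: "phi integrable_on {0..eps}"
    unfolding phi_def by (intro prod_abs_int ga continuous_intros Hc)
  have gi: "g integrable_on {0..eps}" and gai: "(\<lambda>y. \<bar>g y\<bar>) integrable_on {0..eps}"
    using ga unfolding absolutely_integrable_on_def by auto
  have diff: "f d - f c = integral {c..d} g" if "0 \<le> c" "c \<le> d" "d \<le> eps" for c d
  proof -
    have "integral {0..c} g + integral {c..d} g = integral {0..d} g"
      using that by (intro Henstock_Kurzweil_Integration.integral_combine integrable_on_subinterval[OF gi]) auto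
    then show ?thesis using fx[of c] fx[of d] that by auto
  qed
  have absdiff: "\<bar>f d - f c\<bar> \<le> integral {c..d} (\<lambda>y. \<bar>g y\<bar>)" if "0 \<le> c" "c \<le> d" "d \<le> eps" for c d
  proof -
    have "norm (integral {c..d} g) \<le> integral {c..d} (\<lambda>y. \<bar>g y\<bar>)"
      using that by (intro integral_norm_bound_integral integrable_on_subinterval[OF gi]
          integrable_on_subinterval[OF gai]) auto
    then show ?thesis using diff[OF that] by simp
  qed
  have "uniformly_continuous_on {0..eps} H"
    using Hc by (intro compact_uniformly_continuous) auto
  then obtain d where d: "d > 0"
    and dH: "\<And>x x'. x \<in> {0..eps} \<Longrightarrow> x' \<in> {0..eps} \<Longrightarrow> dist x' x < d \<Longrightarrow> dist (H x') (H x) < dl"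
    unfolding uniformly_continuous_on_def using dl by metis
  define N :: nat where "N = nat \<lceil>(b - a) / d\<rceil> + 1"
  have Npos: "N > 0" unfolding N_def by simp
  have "(b - a) / d < real N" unfolding N_def by linarith
  then have Nd: "(b - a) / real N < d" using Npos d by (simp add: field_simps)
  define x where "x = (\<lambda>k::nat. a + real k * (b - a) / real N)"
  have xr: "a \<le> x k \<and> x k \<le> b" if "k \<le> N" for k
  proof -
    have "real k * (b - a) \<le> real N * (b - a)" using that ab by (intro mult_right_mono) auto
    then have "real k * (b - a) / real N \<le> b - a"
      using Npos by (simp add: pos_divide_le_eq mult.commute)
    moreover have "0 \<le> real k * (b - a) / real N" using ab by simp
    ultimately show ?thesis unfolding x_def by simp
  qed
  have xs: "x (Suc k) - x k = (b - a) / real N" for k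
    unfolding x_def by (simp add: add_divide_distrib[symmetric] algebra_simps)
  have step: "\<bar>F (x (Suc k)) - F (x k)\<bar> \<le> q * integral {x k..x (Suc k)} phi" if k: "Suc k \<le> N" for k
  proof -
    define c c' where "c = x k" and "c' = x (Suc k)"
    have nn: "0 \<le> (b - a) / real N" using ab by simp
    have x1: "a \<le> x k" "x k \<le> b" using xr[of k] k by auto
    have x2: "a \<le> x (Suc k)" "x (Suc k) \<le> b" using xr[of "Suc k"] k by auto
    have cc: "0 \<le> c" "c \<le> c'" "c' \<le> eps" "c' - c < d"
      unfolding c_def c'_def using x1 x2 ab xs[of k] nn Nd by linarith+
    define M where "M = (max \<bar>f c'\<bar> \<bar>f c\<bar>) powr (q - 1)"
    have M0: "M \<ge> 0" unfolding M_def by simp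
    have "\<bar>F c' - F c\<bar> \<le> q * M * \<bar>\<bar>f c'\<bar> - \<bar>f c\<bar>\<bar>"
      unfolding F_def M_def using q by (intro powr_mvt) auto
    also have "\<dots> \<le> q * M * integral {c..c'} (\<lambda>y. \<bar>g y\<bar>)"
    proof -
      have "\<bar>\<bar>f c'\<bar> - \<bar>f c\<bar>\<bar> \<le> \<bar>f c' - f c\<bar>" by simp
      also have "\<dots> \<le> integral {c..c'} (\<lambda>y. \<bar>g y\<bar>)" using absdiff cc by auto
      finally show ?thesis using M0 q by (intro mult_left_mono) auto
    qed
    also have "\<dots> = q * integral {c..c'} (\<lambda>y. M * \<bar>g y\<bar>)"
      by (simp add: integral_mult)
    also have "\<dots> \<le> q * integral {c..c'} phi"
    proof -
      have sub: "{c..c'} \<subseteq> {0..eps}" using cc by auto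
      have "integral {c..c'} (\<lambda>y. M * \<bar>g y\<bar>) \<le> integral {c..c'} phi"
      proof (rule integral_le)
        show "(\<lambda>y. M * \<bar>g y\<bar>) integrable_on {c..c'}"
          using integrable_on_subinterval[OF gai sub] by (rule integrable_on_mult_right)
        show "phi integrable_on {c..c'}" using integrable_on_subinterval[OF phii sub] .
        fix y assume y: "y \<in> {c..c'}"
        have MH: "M \<le> H y + dl"
        proof -
          have yin: "y \<in> {0..eps}" using y sub by auto
          have "\<bar>c' - y\<bar> < d" using cc y by auto
          then have "\<bar>H c' - H y\<bar> < dl" using dH[of y c'] yin cc by (auto simp: dist_real_def)
          then have 1: "H c' < H y + dl" by (simp add: abs_less_iff)
          have "\<bar>c - y\<bar> < d" using cc y by auto
          then have "\<bar>H c - H y\<bar> < dl" using dH[of y c] yin cc by (auto simp: dist_real_def)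
          then have 2: "H c < H y + dl" by (simp add: abs_less_iff)
          have "M = H c' \<or> M = H c" unfolding M_def H_def by (simp add: max_def)
          then show ?thesis using 1 2 by auto
        qed
        show "M * \<bar>g y\<bar> \<le> phi y" unfolding phi_def using MH by (intro mult_right_mono) auto
      qed
      then show ?thesis using q by (intro mult_left_mono) auto
    qed
    finally show ?thesis unfolding c_def c'_def .
  qed
  have ind: "\<bar>F (x k) - F a\<bar> \<le> q * integral {a..x k} phi" if "k \<le> N" for k
    using that
  proof (induction k)
    case 0
    then show ?case by (simp add: x_def)
  next
    case (Suc k)
    have IH: "\<bar>F (x k) - F a\<bar> \<le> q * integral {a..x k} phi" using Suc by auto
    have nn: "0 \<le> (b - a) / real N" using ab by simp
    have x1: "a \<le> x k" "x k \<le> b" using xr[of k] Suc.prems by auto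
    have x2: "a \<le> x (Suc k)" "x (Suc k) \<le> b" using xr[of "Suc k"] Suc.prems by auto
    have r: "a \<le> x k" "x k \<le> x (Suc k)" "x (Suc k) \<le> b"
      using x1 x2 xs[of k] nn by linarith+
    have "integral {a..x k} phi + integral {x k..x (Suc k)} phi = integral {a..x (Suc k)} phi"
      using r ab by (intro Henstock_Kurzweil_Integration.integral_combine integrable_on_subinterval[OF phii]) auto
    moreover have "\<bar>F (x (Suc k)) - F a\<bar> \<le> \<bar>F (x (Suc k)) - F (x k)\<bar> + \<bar>F (x k) - F a\<bar>"
      by linarith
    moreover have "q * integral {a..x (Suc k)} phi = q * integral {a..x k} phi + q * integral {x k..x (Suc k)} phi"
      using calculation(1) by (simp add: distrib_left[symmetric])
    ultimately show ?case using IH step[OF Suc.prems] by linarith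
  qed
  have "x N = b" unfolding x_def using Npos by simp
  then show ?thesis using ind[of N] unfolding F_def phi_def by simp
qed

lemma edge_var:
  fixes f g :: "real \<Rightarrow> real"
  assumes eps: "eps > 0" and q: "q \<ge> 2" and cf: "continuous_on {0..eps} f"
    and ga: "g absolutely_integrable_on {0..eps}"
    and fx: "\<And>x. x \<in> {0..eps} \<Longrightarrow> f x = f 0 + integral {0..x} g"
    and s: "s \<in> {0..eps}" and t: "t \<in> {0..eps}"
  shows "\<bar>\<bar>f s\<bar> powr q - \<bar>f t\<bar> powr q\<bar> \<le> q * integral {0..eps} (\<lambda>y. \<bar>f y\<bar> powr (q - 1) * \<bar>g y\<bar>)"
proof -
  define H where "H = (\<lambda>y. \<bar>f y\<bar> powr (q - 1))"
  define I where "I = integral {0..eps} (\<lambda>y. H y * \<bar>g y\<bar>)"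
  define J where "J = integral {0..eps} (\<lambda>y. \<bar>g y\<bar>)"
  have Hc: "continuous_on {0..eps} H"
    unfolding H_def using q cf by (intro continuous_on_powr' continuous_intros) auto
  have gai: "(\<lambda>y. \<bar>g y\<bar>) integrable_on {0..eps}"
    using ga unfolding absolutely_integrable_on_def by auto
  have Hgi: "(\<lambda>y. H y * \<bar>g y\<bar>) integrable_on {0..eps}"
    by (intro prod_abs_int ga Hc)
  have J0: "J \<ge> 0" unfolding J_def using gai by (intro integral_nonneg) auto
  have gen: "\<bar>\<bar>f b\<bar> powr q - \<bar>f a\<bar> powr q\<bar> \<le> q * I + q * dl * J"
    if ab: "0 \<le> a" "a \<le> b" "b \<le> eps" and dl: "dl > 0" for a b dl
  proof -
    have phii: "(\<lambda>y. (H y + dl) * \<bar>g y\<bar>) integrable_on {0..eps}"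
      by (intro prod_abs_int ga continuous_intros Hc)
    have "\<bar>\<bar>f b\<bar> powr q - \<bar>f a\<bar> powr q\<bar> \<le> q * integral {a..b} (\<lambda>y. (H y + dl) * \<bar>g y\<bar>)"
      by (rule edge_var_delta[OF eps q cf ga fx H_def ab dl])
    also have "integral {a..b} (\<lambda>y. (H y + dl) * \<bar>g y\<bar>) \<le> integral {0..eps} (\<lambda>y. (H y + dl) * \<bar>g y\<bar>)"
      using ab dl by (intro integral_subset_le integrable_on_subinterval[OF phii] phii) (auto simp: H_def intro!: mult_nonneg_nonneg add_nonneg_nonneg)
    also have "integral {0..eps} (\<lambda>y. (H y + dl) * \<bar>g y\<bar>) = I + dl * J"
    proof -
      have "(\<lambda>y. (H y + dl) * \<bar>g y\<bar>) = (\<lambda>y. H y * \<bar>g y\<bar> + dl * \<bar>g y\<bar>)"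
        by (simp add: algebra_simps)
      then show ?thesis unfolding I_def J_def
        using Hgi integrable_on_mult_right[OF gai, of dl] by (simp add: integral_add integral_mult)
    qed
    finally show ?thesis using q by (simp add: algebra_simps)
  qed
  have main: "\<bar>\<bar>f s\<bar> powr q - \<bar>f t\<bar> powr q\<bar> \<le> q * I + q * dl * J" if dl: "dl > 0" for dl
  proof (cases "s \<le> t")
    case True
    then show ?thesis using gen[of s t dl] s t dl by (auto simp: abs_minus_commute)
  next
    case False
    then show ?thesis using gen[of t s dl] s t dl by auto
  qed
  have "\<bar>\<bar>f s\<bar> powr q - \<bar>f t\<bar> powr q\<bar> \<le> q * I"
  proof (rule field_le_epsilon)
    fix e :: real assume e: "e > 0"
    define dl where "dl = e / (q * (J + 1))"
    have dl0: "dl > 0" unfolding dl_def using e q J0 by simp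
    have "q * dl * J \<le> q * dl * (J + 1)" using dl0 q by simp
    also have "q * dl * (J + 1) = e" unfolding dl_def using q J0 by simp
    finally show "\<bar>\<bar>f s\<bar> powr q - \<bar>f t\<bar> powr q\<bar> \<le> q * I + e" using main[OF dl0] by linarith
  qed
  then show ?thesis unfolding I_def H_def .
qed



lemma nn_count_summable:
  fixes h :: "'a \<Rightarrow> real"
  assumes "\<And>x. h x \<ge> 0" "(\<integral>\<^sup>+ x. ennreal (h x) \<partial>count_space UNIV) < \<infinity>"
  shows "h summable_on UNIV"
proof -
  have "integrable (count_space UNIV) h"
    by (rule integrableI_bounded) (use assms in auto)
  then have "Infinite_Set_Sum.abs_summable_on h UNIV"
    by (simp add: Infinite_Set_Sum.abs_summable_on_def)
  then have "Infinite_Sum.abs_summable_on h UNIV"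
    using abs_summable_equivalent by blast
  then show ?thesis by (rule abs_summable_summable)
qed

lemma set_nn_to_lbint:
  fixes h :: "real \<Rightarrow> real"
  assumes "set_integrable lborel A h" "\<And>x. h x \<ge> 0"
  shows "(\<integral>\<^sup>+ t\<in>A. ennreal (h t) \<partial>lborel) = ennreal (LBINT t:A. h t)"
proof -
  have i: "integrable lborel (\<lambda>t. h t * indicator A t)"
    using assms(1) unfolding set_integrable_def by (simp add: mult.commute)
  have "(\<integral>\<^sup>+ t\<in>A. ennreal (h t) \<partial>lborel) = (\<integral>\<^sup>+ t. ennreal (h t * indicator A t) \<partial>lborel)"
    by (rule nn_integral_set_ennreal)
  also have "\<dots> = ennreal (integral\<^sup>L lborel (\<lambda>t. h t * indicator A t))"
    by (rule nn_integral_eq_integral[OF i]) (use assms in \<open>auto simp: indicator_def\<close>)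
  also have "integral\<^sup>L lborel (\<lambda>t. h t * indicator A t) = (LBINT t:A. h t)"
    unfolding set_lebesgue_integral_def by (simp add: mult.commute)
  finally show ?thesis .
qed

lemma abs_powr_two: "\<bar>x::real\<bar> powr 2 = x^2"
  by (cases "x = 0") (simp_all add: powr_numeral)



definition Ae :: "real \<Rightarrow> (real \<times> real \<Rightarrow> real) \<Rightarrow> (edge \<Rightarrow> real \<Rightarrow> real) \<Rightarrow> real \<Rightarrow> edge \<Rightarrow> real" where
  "Ae eps u g q e = integral {0..eps} (\<lambda>t. \<bar>u (edge_pt eps e t)\<bar> powr (q - 1) * \<bar>g e t\<bar>)"

definition Ze :: "real \<Rightarrow> (real \<times> real \<Rightarrow> real) \<Rightarrow> real \<Rightarrow> edge \<Rightarrow> real" where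
  "Ze eps u r e = (LBINT t:{0..eps}. \<bar>u (edge_pt eps e t)\<bar> powr r)"

definition Ye :: "real \<Rightarrow> (edge \<Rightarrow> real \<Rightarrow> real) \<Rightarrow> edge \<Rightarrow> real" where
  "Ye eps g e = (LBINT t:{0..eps}. (g e t)^2)"

lemma Lpow_Ze: "Lpow eps u r = infsum (Ze eps u r) UNIV"
  unfolding Lpow_def Ze_def by simp

lemma deriv_Ye: "deriv_L2sq eps g = infsum (Ye eps g) UNIV"
  unfolding deriv_L2sq_def Ye_def by simp

context
  fixes eps :: real and u :: "real \<times> real \<Rightarrow> real" and g :: "edge \<Rightarrow> real \<Rightarrow> real"
  assumes eps: "eps > 0" and H: "H1_graph eps u g"
begin

lemma He: "H1_edge eps (\<lambda>t. u (edge_pt eps e t)) (g e)"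
  using H unfolding H1_graph_def by blast

lemma e_abs: "g e absolutely_integrable_on {0..eps}"
  using edge_basic(1)[OF eps He] .
lemma e_g2: "(\<lambda>t. (g e t)^2) integrable_on {0..eps}"
  using edge_basic(2)[OF eps He] .
lemma e_Ye: "Ye eps g e = integral {0..eps} (\<lambda>t. (g e t)^2)"
  using edge_basic(3)[OF eps He] unfolding Ye_def .
lemma e_fx: "x \<in> {0..eps} \<Longrightarrow> u (edge_pt eps e x) = u (edge_pt eps e 0) + integral {0..x} (g e)"
  using edge_basic(4)[OF eps He] .
lemma e_cont: "continuous_on {0..eps} (\<lambda>t. u (edge_pt eps e t))"
  using edge_basic(5)[OF eps He] .

lemma e_Ye_nonneg: "Ye eps g e \<ge> 0"
  unfolding e_Ye using e_g2 by (intro integral_nonneg) auto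

lemma e_pow_cont:
  assumes "r > 0"
  shows "continuous_on {0..eps} (\<lambda>t. \<bar>u (edge_pt eps e t)\<bar> powr r)"
  using assms e_cont by (intro continuous_on_powr' continuous_intros) auto

lemma e_pow_setint:
  assumes "r > 0"
  shows "set_integrable lborel {0..eps} (\<lambda>t. \<bar>u (edge_pt eps e t)\<bar> powr r)"
  unfolding set_integrable_def by (rule borel_integrable_compact) (auto intro: e_pow_cont assms)

lemma e_Ze:
  assumes "r > 0"
  shows "Ze eps u r e = integral {0..eps} (\<lambda>t. \<bar>u (edge_pt eps e t)\<bar> powr r)"
    and "(\<lambda>t. \<bar>u (edge_pt eps e t)\<bar> powr r) integrable_on {0..eps}"
  using set_borel_integral_eq_integral[OF e_pow_setint[OF assms]] unfolding Ze_def by auto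

lemma e_Ze_nonneg:
  assumes "r > 0"
  shows "Ze eps u r e \<ge> 0"
  unfolding e_Ze[OF assms] using e_Ze(2)[OF assms] by (intro integral_nonneg) auto

lemma e_Ae_int:
  assumes q: "q \<ge> 2"
  shows "(\<lambda>t. \<bar>u (edge_pt eps e t)\<bar> powr (q - 1) * \<bar>g e t\<bar>) integrable_on {0..eps}"
  using q by (intro prod_abs_int e_abs e_pow_cont) auto

lemma e_Ae_nonneg:
  assumes q: "q \<ge> 2"
  shows "Ae eps u g q e \<ge> 0"
  unfolding Ae_def using e_Ae_int[OF q] by (intro integral_nonneg) auto

lemma e_var:
  assumes q: "q \<ge> 2" and s: "s \<in> {0..eps}" and t: "t \<in> {0..eps}"
  shows "\<bar>\<bar>u (edge_pt eps e s)\<bar> powr q - \<bar>u (edge_pt eps e t)\<bar> powr q\<bar> \<le> q * Ae eps u g q e"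
  unfolding Ae_def
  by (rule edge_var[OF eps q e_cont e_abs _ s t]) (rule e_fx)

lemma e_Ae_le:
  assumes q: "q \<ge> 2" and l: "l > 0"
  shows "Ae eps u g q e \<le> (l * Ze eps u (2 * (q - 1)) e + Ye eps g e / l) / 2"
proof -
  define A where "A = (\<lambda>t. \<bar>u (edge_pt eps e t)\<bar> powr (2 * (q - 1)))"
  define B where "B = (\<lambda>t. (g e t)^2)"
  have r: "2 * (q - 1) > 0" using q by simp
  have Ai: "A integrable_on {0..eps}" unfolding A_def using e_Ze(2)[OF r] .
  have Bi: "B integrable_on {0..eps}" unfolding B_def using e_g2 .
  have "Ae eps u g q e \<le> integral {0..eps} (\<lambda>t. (l / 2) * A t + (1 / (2 * l)) * B t)"
    unfolding Ae_def
  proof (rule integral_le)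
    show "(\<lambda>t. \<bar>u (edge_pt eps e t)\<bar> powr (q - 1) * \<bar>g e t\<bar>) integrable_on {0..eps}"
      by (rule e_Ae_int[OF q])
    show "(\<lambda>t. (l / 2) * A t + (1 / (2 * l)) * B t) integrable_on {0..eps}"
      by (intro integrable_add integrable_on_mult_right Ai Bi)
    fix t
    have sq: "(\<bar>u (edge_pt eps e t)\<bar> powr (q - 1))^2 = A t"
    proof -
      have e2: "2 * (q - 1) = (q - 1) + (q - 1)" by simp
      show ?thesis unfolding A_def e2 powr_add power2_eq_square ..
    qed
    have "\<bar>u (edge_pt eps e t)\<bar> powr (q - 1) * \<bar>g e t\<bar>
        \<le> (l * (\<bar>u (edge_pt eps e t)\<bar> powr (q - 1))^2 + \<bar>g e t\<bar>^2 / l) / 2"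
      by (rule amgm_l[OF l])
    also have "\<dots> = (l / 2) * A t + (1 / (2 * l)) * B t"
      unfolding sq B_def by simp
    finally show "\<bar>u (edge_pt eps e t)\<bar> powr (q - 1) * \<bar>g e t\<bar> \<le> (l / 2) * A t + (1 / (2 * l)) * B t" .
  qed
  also have "\<dots> = integral {0..eps} (\<lambda>t. (l / 2) * A t) + integral {0..eps} (\<lambda>t. (1 / (2 * l)) * B t)"
    by (rule integral_add) (intro integrable_on_mult_right Ai Bi)+
  also have "\<dots> = (l / 2) * integral {0..eps} A + (1 / (2 * l)) * integral {0..eps} B"
    using integral_mult[OF Ai, of "l/2"] integral_mult[OF Bi, of "1/(2*l)"] by simp
  also have "\<dots> = (l * Ze eps u (2 * (q - 1)) e + Ye eps g e / l) / 2"
    unfolding e_Ze(1)[OF r] e_Ye A_def B_def by (simp add: field_simps)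
  finally show ?thesis .
qed

end



context
  fixes eps :: real and u :: "real \<times> real \<Rightarrow> real" and g :: "edge \<Rightarrow> real \<Rightarrow> real"
  assumes eps: "eps > 0" and H: "H1_graph eps u g"
begin

lemma e_sup:
  assumes t: "t \<in> {0..eps}"
  shows "(u (edge_pt eps e t))^2 \<le> 2 / eps * Ze eps u 2 e + 2 * eps * Ye eps g e"
proof -
  define f where "f = (\<lambda>t. u (edge_pt eps e t))"
  define J where "J = integral {0..eps} (\<lambda>y. \<bar>g e y\<bar>)"
  define Y where "Y = Ye eps g e"
  have gi: "g e integrable_on {0..eps}" and gai: "(\<lambda>y. \<bar>g e y\<bar>) integrable_on {0..eps}"
    using e_abs[OF eps H] unfolding absolutely_integrable_on_def by auto
  have g2: "(\<lambda>y. (g e y)^2) integrable_on {0..eps}" using e_g2[OF eps H] .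
  have Y0: "Y \<ge> 0" unfolding Y_def using e_Ye_nonneg[OF eps H] .
  have J0: "J \<ge> 0" unfolding J_def using gai by (intro integral_nonneg) auto
  have dif1: "\<bar>f b - f a\<bar> \<le> J" if ab: "0 \<le> a" "a \<le> b" "b \<le> eps" for a b
  proof -
    have "integral {0..a} (g e) + integral {a..b} (g e) = integral {0..b} (g e)"
      using ab by (intro Henstock_Kurzweil_Integration.integral_combine integrable_on_subinterval[OF gi]) auto
    then have "f b - f a = integral {a..b} (g e)"
      using e_fx[OF eps H, of a e] e_fx[OF eps H, of b e] ab unfolding f_def by auto
    also have "\<bar>\<dots>\<bar> \<le> integral {a..b} (\<lambda>y. \<bar>g e y\<bar>)"
      using ab by (simp only: real_norm_def[symmetric], intro integral_norm_bound_integral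
          integrable_on_subinterval[OF gi] integrable_on_subinterval[OF gai]) (auto intro: integrable_on_subinterval[OF gai])
    also have "\<dots> \<le> J"
      unfolding J_def using ab by (intro integral_subset_le integrable_on_subinterval[OF gai] gai) auto
    finally show ?thesis .
  qed
  have dif: "\<bar>f b - f a\<bar> \<le> J" if "a \<in> {0..eps}" "b \<in> {0..eps}" for a b
    using dif1[of a b] dif1[of b a] that by (cases "a \<le> b") (auto simp: abs_minus_commute)
  have "J \<le> sqrt Y * sqrt eps"
  proof (rule cs_trick[OF Y0])
    show "0 \<le> eps" using eps by simp
    fix l :: real assume l: "l > 0"
    have "J \<le> integral {0..eps} (\<lambda>y. (l / 2) * (g e y)^2 + 1 / (2 * l))"
      unfolding J_def
    proof (rule integral_le[OF gai])
      show "(\<lambda>y. (l / 2) * (g e y)^2 + 1 / (2 * l)) integrable_on {0..eps}"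
        by (intro integrable_add integrable_on_mult_right g2 integrable_const_ivl)
      fix y
      have "\<bar>g e y\<bar> * 1 \<le> (l * \<bar>g e y\<bar>^2 + 1^2 / l) / 2" by (rule amgm_l[OF l])
      then show "\<bar>g e y\<bar> \<le> (l / 2) * (g e y)^2 + 1 / (2 * l)" by (simp add: field_simps)
    qed
    also have "\<dots> = integral {0..eps} (\<lambda>y. (l / 2) * (g e y)^2) + integral {0..eps} (\<lambda>y. 1 / (2 * l))"
      by (rule integral_add) (intro integrable_on_mult_right g2 integrable_const_ivl)+
    also have "\<dots> = (l / 2) * Y + eps / (2 * l)"
      using integral_mult[OF g2, of "l/2"] eps unfolding Y_def e_Ye[OF eps H] by simp
    also have "\<dots> = (l * Y + eps / l) / 2" by (simp add: field_simps)
    finally show "J \<le> (l * Y + eps / l) / 2" .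
  qed
  then have "J^2 \<le> (sqrt Y * sqrt eps)^2" using J0 by (intro power_mono) auto
  also have "\<dots> = Y * eps" using Y0 eps by (simp add: power_mult_distrib)
  finally have J2: "J^2 \<le> Y * eps" .
  have pt: "(f t)^2 \<le> 2 * (f s)^2 + 2 * J^2" if s: "s \<in> {0..eps}" for s
  proof -
    have "(f t - f s)^2 \<le> J^2"
      using dif[OF s t] by (metis abs_ge_zero power2_abs power_mono)
    moreover have "(f t)^2 \<le> 2 * (f s)^2 + 2 * (f t - f s)^2"
    proof -
      have "0 \<le> (f t - 2 * f s)^2" by simp
      then show ?thesis by (simp add: power2_eq_square algebra_simps)
    qed
    ultimately show ?thesis by linarith
  qed
  have f2i: "(\<lambda>s. (f s)^2) integrable_on {0..eps}"
    using e_Ze(2)[OF eps H, of 2 e] unfolding f_def abs_powr_two by simp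
  have Z2: "Ze eps u 2 e = integral {0..eps} (\<lambda>s. (f s)^2)"
    using e_Ze(1)[OF eps H, of 2 e] unfolding f_def abs_powr_two by simp
  have "eps * (f t)^2 = integral {0..eps} (\<lambda>s. (f t)^2)" using eps by simp
  also have "\<dots> \<le> integral {0..eps} (\<lambda>s. 2 * (f s)^2 + 2 * J^2)"
    by (rule integral_le) (auto intro!: integrable_add integrable_on_mult_right f2i pt)
  also have "\<dots> = integral {0..eps} (\<lambda>s. 2 * (f s)^2) + integral {0..eps} (\<lambda>s. 2 * J^2)"
    by (rule integral_add) (intro integrable_on_mult_right f2i integrable_const_ivl)+
  also have "\<dots> = 2 * Ze eps u 2 e + eps * (2 * J^2)"
    using integral_mult[OF f2i, of 2] eps unfolding Z2 by simp
  finally have "eps * (f t)^2 \<le> 2 * Ze eps u 2 e + eps * (2 * J^2)" .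
  then have "(f t)^2 \<le> (2 * Ze eps u 2 e + eps * (2 * J^2)) / eps"
    using eps by (simp add: field_simps)
  also have "\<dots> = 2 / eps * Ze eps u 2 e + 2 * J^2" using eps by (simp add: field_simps)
  also have "\<dots> \<le> 2 / eps * Ze eps u 2 e + 2 * eps * Y" using J2 by (simp add: mult.commute)
  finally show ?thesis unfolding f_def Y_def .
qed

end



context
  fixes eps :: real and u :: "real \<times> real \<Rightarrow> real" and g :: "edge \<Rightarrow> real \<Rightarrow> real"
  assumes eps: "eps > 0" and H: "H1_graph eps u g"
begin

lemma sum_Ye: "Ye eps g summable_on UNIV"
proof (rule nn_count_summable)
  show "Ye eps g e \<ge> 0" for e using e_Ye_nonneg[OF eps H] .
  have "(\<integral>\<^sup>+ t\<in>{0..eps}. ennreal ((g e t)\<^sup>2) \<partial>lborel) = ennreal (Ye eps g e)" for e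
  proof -
    have "set_integrable lborel {0..eps} (\<lambda>t. (g e t)\<^sup>2)"
      using He[OF eps H, of e] unfolding H1_edge_def by blast
    then show ?thesis unfolding Ye_def by (rule set_nn_to_lbint) simp
  qed
  then show "(\<integral>\<^sup>+ e. ennreal (Ye eps g e) \<partial>count_space UNIV) < \<infinity>"
    using H unfolding H1_graph_def by simp
qed

lemma sum_Z2: "Ze eps u 2 summable_on UNIV"
proof (rule nn_count_summable)
  show "Ze eps u 2 e \<ge> 0" for e using e_Ze_nonneg[OF eps H] by simp
  have "(\<integral>\<^sup>+ t\<in>{0..eps}. ennreal ((u (edge_pt eps e t))\<^sup>2) \<partial>lborel) = ennreal (Ze eps u 2 e)" for e
  proof -
    have "set_integrable lborel {0..eps} (\<lambda>t. (u (edge_pt eps e t))\<^sup>2)"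
      using e_pow_setint[OF eps H, of 2 e] unfolding abs_powr_two by simp
    then show ?thesis unfolding Ze_def abs_powr_two by (rule set_nn_to_lbint) simp
  qed
  then show "(\<integral>\<^sup>+ e. ennreal (Ze eps u 2 e) \<partial>count_space UNIV) < \<infinity>"
    using H unfolding H1_graph_def by simp
qed

definition Bd :: real where
  "Bd = 2 / eps * infsum (Ze eps u 2) UNIV + 2 * eps * infsum (Ye eps g) UNIV"

lemma le_infsum1:
  fixes h :: "'a \<Rightarrow> real"
  assumes "h summable_on UNIV" "\<And>x. h x \<ge> 0"
  shows "h x \<le> infsum h UNIV"
  using finite_sum_le_infsum[OF assms(1), of "{x}"] assms(2) by simp

lemma bound2: "t \<in> {0..eps} \<Longrightarrow> (u (edge_pt eps e t))^2 \<le> Bd"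
proof -
  assume t: "t \<in> {0..eps}"
  have "Ze eps u 2 e \<le> infsum (Ze eps u 2) UNIV"
    by (rule le_infsum1[OF sum_Z2]) (use e_Ze_nonneg[OF eps H] in simp)
  moreover have "Ye eps g e \<le> infsum (Ye eps g) UNIV"
    by (rule le_infsum1[OF sum_Ye]) (use e_Ye_nonneg[OF eps H] in simp)
  ultimately have "2 / eps * Ze eps u 2 e + 2 * eps * Ye eps g e \<le> Bd"
    unfolding Bd_def using eps by (intro add_mono mult_left_mono) auto
  then show ?thesis using e_sup[OF eps H t, of e] by linarith
qed

lemma Bd_nonneg: "Bd \<ge> 0"
  using bound2[of 0 "((0,0),True)"] eps by (smt (verit) atLeastAtMost_iff zero_le_power2)

lemma bound: "t \<in> {0..eps} \<Longrightarrow> \<bar>u (edge_pt eps e t)\<bar> \<le> sqrt Bd"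
  using bound2 real_le_rsqrt by (metis power2_abs)

lemma powr_split_le:
  fixes x K r :: real
  assumes "r \<ge> 2" "\<bar>x\<bar> \<le> K"
  shows "\<bar>x\<bar> powr r \<le> K powr (r - 2) * x^2"
proof -
  have "\<bar>x\<bar> powr r = \<bar>x\<bar> powr ((r - 2) + 2)" by simp
  also have "\<dots> = \<bar>x\<bar> powr (r - 2) * \<bar>x\<bar> powr 2" by (rule powr_add)
  also have "\<dots> \<le> K powr (r - 2) * \<bar>x\<bar> powr 2"
    using assms by (intro mult_right_mono powr_mono2) auto
  finally show ?thesis unfolding abs_powr_two .
qed

lemma Ze_le:
  assumes r: "r \<ge> 2"
  shows "Ze eps u r e \<le> sqrt Bd powr (r - 2) * Ze eps u 2 e"
proof -
  have r0: "r > 0" using r by simp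
  have i2: "(\<lambda>t. (u (edge_pt eps e t))^2) integrable_on {0..eps}"
    using e_Ze(2)[OF eps H, of 2 e] unfolding abs_powr_two by simp
  have "Ze eps u r e \<le> integral {0..eps} (\<lambda>t. sqrt Bd powr (r - 2) * (u (edge_pt eps e t))^2)"
    unfolding e_Ze(1)[OF eps H r0]
    by (rule integral_le[OF e_Ze(2)[OF eps H r0]]) (auto intro!: integrable_on_mult_right i2 powr_split_le r bound)
  also have "\<dots> = sqrt Bd powr (r - 2) * Ze eps u 2 e"
    using integral_mult[OF i2, of "sqrt Bd powr (r - 2)"] e_Ze(1)[OF eps H, of 2 e] unfolding abs_powr_two by simp
  finally show ?thesis .
qed

lemma sum_Ze:
  assumes r: "r \<ge> 2"
  shows "Ze eps u r summable_on UNIV"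
  by (rule summable_on_comparison_test[OF summable_on_cmult_right[OF sum_Z2]])
     (use Ze_le[OF r] e_Ze_nonneg[OF eps H, of r] r in auto)

lemma sum_Ae:
  assumes q: "q \<ge> 2"
  shows "Ae eps u g q summable_on UNIV"
proof (rule summable_on_comparison_test)
  show "(\<lambda>e. (1/2) * (Ze eps u (2 * (q - 1)) e + Ye eps g e)) summable_on UNIV"
    using sum_Ze[of "2 * (q - 1)"] sum_Ye q by (intro summable_on_add summable_on_cmult_right) auto
  show "Ae eps u g q e \<le> (1/2) * (Ze eps u (2 * (q - 1)) e + Ye eps g e)" for e
    using e_Ae_le[OF eps H q, of 1 e] by simp
  show "0 \<le> Ae eps u g q e" for e by (rule e_Ae_nonneg[OF eps H q])
qed

lemma vertex_edge: "vertex_pt eps v = edge_pt eps (v, True) 0"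
  unfolding vertex_pt_def edge_pt_def by simp

lemma sum_vert:
  assumes q: "q \<ge> 2"
  shows "(\<lambda>v. \<bar>u (vertex_pt eps v)\<bar> powr q) summable_on V"
proof -
  define h where "h = (\<lambda>e. sqrt Bd powr (q - 2) * (2 / eps * Ze eps u 2 e + 2 * eps * Ye eps g e))"
  have hs: "h summable_on UNIV" unfolding h_def
    using sum_Z2 sum_Ye by (intro summable_on_cmult_right summable_on_add) auto
  have "h summable_on ((\<lambda>v. (v, True)) ` UNIV)" by (rule summable_on_subset[OF hs]) auto
  then have "(h \<circ> (\<lambda>v. (v, True))) summable_on UNIV"
    by (subst summable_on_reindex[symmetric]) (auto intro: inj_onI)
  then have hs2: "(h \<circ> (\<lambda>v. (v, True))) summable_on V" by (rule summable_on_subset) auto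
  show ?thesis
  proof (rule summable_on_comparison_test[OF hs2])
    fix v
    have "\<bar>u (vertex_pt eps v)\<bar> powr q \<le> sqrt Bd powr (q - 2) * (u (vertex_pt eps v))^2"
      using bound[of 0 "(v, True)"] eps unfolding vertex_edge by (intro powr_split_le q) auto
    also have "\<dots> \<le> h (v, True)"
      unfolding h_def vertex_edge using e_sup[OF eps H, of 0 "(v, True)"] eps by (intro mult_left_mono) auto
    finally show "\<bar>u (vertex_pt eps v)\<bar> powr q \<le> (h \<circ> (\<lambda>v. (v, True))) v" by simp
  qed simp
qed

end



lemma telescope_int:
  fixes G h :: "int \<Rightarrow> real"
  assumes st: "\<And>i. \<bar>G (i + 1) - G i\<bar> \<le> h i" and ab: "a \<le> b"
  shows "\<bar>G b - G a\<bar> \<le> (\<Sum>i\<in>{a..<b}. h i)"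
  using ab
proof (induction b rule: int_ge_induct)
  case base
  then show ?case by simp
next
  case (step b)
  have e: "{a..<b + 1} = insert b {a..<b}" using step.hyps by auto
  have "\<bar>G (b + 1) - G a\<bar> \<le> \<bar>G (b + 1) - G b\<bar> + \<bar>G b - G a\<bar>" by linarith
  also have "\<dots> \<le> h b + (\<Sum>i\<in>{a..<b}. h i)" using st[of b] step.IH by linarith
  also have "\<dots> = (\<Sum>i\<in>{a..<b + 1}. h i)" unfolding e by simp
  finally show ?case .
qed

lemma telescope_int_sym:
  fixes G h :: "int \<Rightarrow> real"
  assumes st: "\<And>i. \<bar>G (i + 1) - G i\<bar> \<le> h i"
  shows "\<bar>G x - G y\<bar> \<le> (\<Sum>i\<in>{min x y..<max x y}. h i)"
proof (cases "x \<le> y")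
  case True
  then show ?thesis using telescope_int[of G h, OF st True] by (simp add: abs_minus_commute min_def max_def)
next
  case False
  then show ?thesis using telescope_int[of G h y x, OF st] by (simp add: min_def max_def)
qed

lemma edge_T0: "edge_pt eps ((i, j), True) 0 = vertex_pt eps (i, j)"
  and edge_T1: "edge_pt eps ((i, j), True) eps = vertex_pt eps (i + 1, j)"
  and edge_F0: "edge_pt eps ((i, j), False) 0 = vertex_pt eps (i, j)"
  and edge_F1: "edge_pt eps ((i, j), False) eps = vertex_pt eps (i, j + 1)"
  and edge_0: "edge_pt eps (p, b) 0 = vertex_pt eps p"
  unfolding edge_pt_def vertex_pt_def by (auto simp: algebra_simps)

definition Fv :: "real \<Rightarrow> (real \<times> real \<Rightarrow> real) \<Rightarrow> real \<Rightarrow> zpt \<Rightarrow> real" where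
  "Fv eps u q v = \<bar>u (vertex_pt eps v)\<bar> powr q"

definition Dp :: "real \<Rightarrow> (real \<times> real \<Rightarrow> real) \<Rightarrow> (edge \<Rightarrow> real \<Rightarrow> real) \<Rightarrow> real \<Rightarrow> int \<Rightarrow> int \<Rightarrow> zpt \<Rightarrow> zpt \<Rightarrow> real" where
  "Dp eps u g q a b x y =
     (\<Sum>i\<in>{min (fst x) (fst y)..<max (fst x) (fst y)}. Ae eps u g q ((i + a, snd x + b), True)) +
     (\<Sum>j\<in>{min (snd x) (snd y)..<max (snd x) (snd y)}. Ae eps u g q ((fst y + a, j + b), False))"

context
  fixes eps :: real and u :: "real \<times> real \<Rightarrow> real" and g :: "edge \<Rightarrow> real \<Rightarrow> real"
  assumes eps: "eps > 0" and H: "H1_graph eps u g"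
begin

lemma path_bound:
  assumes q: "q \<ge> 2"
  shows "\<bar>Fv eps u q (fst x + a, snd x + b) - Fv eps u q (fst y + a, snd y + b)\<bar> \<le> q * Dp eps u g q a b x y"
proof -
  have z: "0 \<in> {0..eps}" "eps \<in> {0..eps}" using eps by auto
  define G1 where "G1 = (\<lambda>i. Fv eps u q (i + a, snd x + b))"
  define G2 where "G2 = (\<lambda>j. Fv eps u q (fst y + a, j + b))"
  have s1: "\<bar>G1 (i + 1) - G1 i\<bar> \<le> q * Ae eps u g q ((i + a, snd x + b), True)" for i
    using e_var[OF eps H q z(2) z(1), of "((i + a, snd x + b), True)"]
    unfolding G1_def Fv_def edge_T0 edge_T1 by (simp add: algebra_simps)
  have s2: "\<bar>G2 (j + 1) - G2 j\<bar> \<le> q * Ae eps u g q ((fst y + a, j + b), False)" for j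
    using e_var[OF eps H q z(2) z(1), of "((fst y + a, j + b), False)"]
    unfolding G2_def Fv_def edge_F0 edge_F1 by (simp add: algebra_simps)
  have h1: "\<bar>G1 (fst x) - G1 (fst y)\<bar> \<le> (\<Sum>i\<in>{min (fst x) (fst y)..<max (fst x) (fst y)}. q * Ae eps u g q ((i + a, snd x + b), True))"
    by (rule telescope_int_sym[of G1 "\<lambda>i. q * Ae eps u g q ((i + a, snd x + b), True)", OF s1])
  have h2: "\<bar>G2 (snd x) - G2 (snd y)\<bar> \<le> (\<Sum>j\<in>{min (snd x) (snd y)..<max (snd x) (snd y)}. q * Ae eps u g q ((fst y + a, j + b), False))"
    by (rule telescope_int_sym[of G2 "\<lambda>j. q * Ae eps u g q ((fst y + a, j + b), False)", OF s2])
  have "G1 (fst y) = G2 (snd x)" unfolding G1_def G2_def ..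
  then have "\<bar>Fv eps u q (fst x + a, snd x + b) - Fv eps u q (fst y + a, snd y + b)\<bar>
      \<le> \<bar>G1 (fst x) - G1 (fst y)\<bar> + \<bar>G2 (snd x) - G2 (snd y)\<bar>"
    unfolding G1_def G2_def by simp
  also have "\<dots> \<le> q * Dp eps u g q a b x y"
    using h1 h2 unfolding Dp_def by (simp add: sum_distrib_left[symmetric] distrib_left)
  finally show ?thesis .
qed

end



context
  fixes eps :: real and u :: "real \<times> real \<Rightarrow> real" and g :: "edge \<Rightarrow> real \<Rightarrow> real"
  assumes eps: "eps > 0" and H: "H1_graph eps u g"
begin

lemma ve_bound:
  assumes q: "q \<ge> 2"
  shows "\<bar>eps * Fv eps u q (fst x + a, snd x + b) - Ze eps u q ((fst y + a, snd y + b), bb)\<bar>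
          \<le> eps * q * (Dp eps u g q a b x y + Ae eps u g q ((fst y + a, snd y + b), bb))"
proof -
  define p where "p = (fst y + a, snd y + b)"
  define e where "e = (p, bb)"
  define Fe where "Fe = (\<lambda>t. \<bar>u (edge_pt eps e t)\<bar> powr q)"
  define W where "W = Fv eps u q (fst x + a, snd x + b)"
  define c where "c = q * Dp eps u g q a b x y + q * Ae eps u g q e"
  have q0: "q > 0" using q by simp
  have Fei: "Fe integrable_on {0..eps}" unfolding Fe_def using e_Ze(2)[OF eps H q0] .
  have Z: "Ze eps u q e = integral {0..eps} Fe" unfolding Fe_def using e_Ze(1)[OF eps H q0] .
  have Fe0: "Fe 0 = Fv eps u q p" unfolding Fe_def Fv_def e_def edge_0 ..
  have pt: "\<bar>W - Fe t\<bar> \<le> c" if t: "t \<in> {0..eps}" for t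
  proof -
    have "\<bar>W - Fv eps u q p\<bar> \<le> q * Dp eps u g q a b x y"
      unfolding W_def p_def by (rule path_bound[OF eps H q])
    moreover have "\<bar>Fe 0 - Fe t\<bar> \<le> q * Ae eps u g q e"
      unfolding Fe_def using eps t by (intro e_var[OF eps H q]) auto
    ultimately show ?thesis unfolding c_def using Fe0 by linarith
  qed
  have "eps * W - Ze eps u q e = integral {0..eps} (\<lambda>t. W - Fe t)"
  proof -
    have "integral {0..eps} (\<lambda>t. W - Fe t) = integral {0..eps} (\<lambda>t. W) - integral {0..eps} Fe"
      by (rule integral_diff) (auto intro: Fei)
    then show ?thesis using eps by (simp add: Z)
  qed
  also have "\<bar>\<dots>\<bar> \<le> integral {0..eps} (\<lambda>t. c)"
    using pt by (simp only: real_norm_def[symmetric], intro integral_norm_bound_integral integrable_diff Fei) auto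
  also have "\<dots> = eps * c" using eps by simp
  finally show ?thesis unfolding c_def W_def e_def p_def by (simp add: algebra_simps)
qed

lemma S_le:
  assumes q: "q \<ge> 2"
  shows "infsum (Ae eps u g q) UNIV \<le> sqrt (infsum (Ze eps u (2 * (q - 1))) UNIV) * sqrt (infsum (Ye eps g) UNIV)"
proof (rule cs_trick)
  have r: "2 * (q - 1) > 0" using q by simp
  show "0 \<le> infsum (Ze eps u (2 * (q - 1))) UNIV"
    using e_Ze_nonneg[OF eps H r] by (intro infsum_nonneg) auto
  show "0 \<le> infsum (Ye eps g) UNIV"
    using e_Ye_nonneg[OF eps H] by (intro infsum_nonneg) auto
  fix l :: real assume l: "l > 0"
  have sZ: "Ze eps u (2 * (q - 1)) summable_on UNIV" using sum_Ze[OF eps H] q by simp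
  have "infsum (Ae eps u g q) UNIV \<le> infsum (\<lambda>e. (l / 2) * Ze eps u (2 * (q - 1)) e + (1 / (2 * l)) * Ye eps g e) UNIV"
  proof (rule infsum_mono)
    show "Ae eps u g q summable_on UNIV" by (rule sum_Ae[OF eps H q])
    show "(\<lambda>e. (l / 2) * Ze eps u (2 * (q - 1)) e + (1 / (2 * l)) * Ye eps g e) summable_on UNIV"
      by (intro summable_on_add summable_on_cmult_right sZ sum_Ye[OF eps H])
    fix e
    show "Ae eps u g q e \<le> (l / 2) * Ze eps u (2 * (q - 1)) e + (1 / (2 * l)) * Ye eps g e"
      using e_Ae_le[OF eps H q l, of e] by (simp add: field_simps)
  qed
  also have "\<dots> = (l / 2) * infsum (Ze eps u (2 * (q - 1))) UNIV + (1 / (2 * l)) * infsum (Ye eps g) UNIV"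
  proof -
    have a: "(\<lambda>e. (l / 2) * Ze eps u (2 * (q - 1)) e) summable_on UNIV" by (intro summable_on_cmult_right sZ)
    have b: "(\<lambda>e. (1 / (2 * l)) * Ye eps g e) summable_on UNIV" by (intro summable_on_cmult_right sum_Ye[OF eps H])
    show ?thesis
      unfolding infsum_add[OF a b] infsum_cmult_right[OF sZ] infsum_cmult_right[OF sum_Ye[OF eps H]] ..
  qed
  also have "\<dots> = (l * infsum (Ze eps u (2 * (q - 1))) UNIV + infsum (Ye eps g) UNIV / l) / 2"
    by (simp add: field_simps)
  finally show "infsum (Ae eps u g q) UNIV \<le> (l * infsum (Ze eps u (2 * (q - 1))) UNIV + infsum (Ye eps g) UNIV / l) / 2" .
qed

end



lemma lat_shift_eq:
  "lat_shift v1 v2 k1 k2 p = (fst p + (k1 * fst v1 + k2 * fst v2), snd p + (k1 * snd v1 + k2 * snd v2))"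
  unfolding lat_shift_def zadd_def zscale_def by simp

lemma lat_shift_comp:
  "lat_shift v1 v2 k1 k2 (lat_shift v1 v2 k1' k2' p) = lat_shift v1 v2 (k1 + k1') (k2 + k2') p"
  unfolding lat_shift_eq by (simp add: algebra_simps)

lemma lat_shift_0: "lat_shift v1 v2 0 0 p = p"
  unfolding lat_shift_eq by simp

lemma lat_inj:
  assumes li: "lin_indep2 v1 v2" and eq: "lat_shift v1 v2 k1 k2 p = lat_shift v1 v2 k1' k2' p'"
    and pp: "p = p'"
  shows "k1 = k1' \<and> k2 = k2'"
proof -
  have e1: "k1 * fst v1 + k2 * fst v2 = k1' * fst v1 + k2' * fst v2"
   and e2: "k1 * snd v1 + k2 * snd v2 = k1' * snd v1 + k2' * snd v2"
    using eq pp unfolding lat_shift_eq by auto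
  have r1: "real_of_int (k1 - k1') * of_int (fst v1) + real_of_int (k2 - k2') * of_int (fst v2) = 0"
  proof -
    have "(k1 - k1') * fst v1 + (k2 - k2') * fst v2 = 0" using e1 by (simp add: algebra_simps)
    then have "real_of_int ((k1 - k1') * fst v1 + (k2 - k2') * fst v2) = 0" by simp
    then show ?thesis by simp
  qed
  have r2: "real_of_int (k1 - k1') * of_int (snd v1) + real_of_int (k2 - k2') * of_int (snd v2) = 0"
  proof -
    have "(k1 - k1') * snd v1 + (k2 - k2') * snd v2 = 0" using e2 by (simp add: algebra_simps)
    then have "real_of_int ((k1 - k1') * snd v1 + (k2 - k2') * snd v2) = 0" by simp
    then show ?thesis by simp
  qed
  have "real_of_int (k1 - k1') = 0 \<and> real_of_int (k2 - k2') = 0"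
  proof -
    have L: "\<forall>a b :: real. a * of_int (fst v1) + b * of_int (fst v2) = 0 \<and>
                    a * of_int (snd v1) + b * of_int (snd v2) = 0 \<longrightarrow> a = 0 \<and> b = 0"
      using li unfolding lin_indep2_def by assumption
    show ?thesis using L[rule_format, OF conjI[OF r1 r2]] .
  qed
  then show ?thesis by simp
qed

definition Phi :: "zpt \<Rightarrow> zpt \<Rightarrow> int \<times> int \<Rightarrow> zpt \<Rightarrow> zpt" where
  "Phi v1 v2 c r = lat_shift v1 v2 (fst c) (snd c) r"

lemma Phi_eq: "Phi v1 v2 c r = (fst r + fst (Phi v1 v2 c (0,0)), snd r + snd (Phi v1 v2 c (0,0)))"
  unfolding Phi_def lat_shift_eq by simp

lemma Phi_inj1:
  assumes "lin_indep2 v1 v2"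
  shows "inj (\<lambda>c. Phi v1 v2 c p)"
proof (rule injI)
  fix c c' assume "Phi v1 v2 c p = Phi v1 v2 c' p"
  then have "fst c = fst c' \<and> snd c = snd c'"
    using lat_inj[OF assms, of "fst c" "snd c" p "fst c'" "snd c'" p] unfolding Phi_def by simp
  then show "c = c'" by (simp add: prod_eq_iff)
qed

context
  fixes V' R :: "zpt set" and v1 v2 :: zpt
  assumes per: "periodic_wrt V' v1 v2" and cr: "complete_reps v1 v2 R"
begin

lemma li: "lin_indep2 v1 v2" using per unfolding periodic_wrt_def by blast

lemma finR: "finite R" using cr unfolding complete_reps_def by blast

lemma Phi_inj: "inj_on (\<lambda>(c, r). Phi v1 v2 c r) (UNIV \<times> R)"
proof (rule inj_onI)
  fix x y assume x: "x \<in> UNIV \<times> R" and y: "y \<in> UNIV \<times> R"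
    and eq0: "(\<lambda>(c, r). Phi v1 v2 c r) x = (\<lambda>(c, r). Phi v1 v2 c r) y"
  obtain a b r where xr: "x = ((a, b), r)" by (metis prod.collapse)
  obtain a' b' r' where yr: "y = ((a', b'), r')" by (metis prod.collapse)
  have r: "r \<in> R" and r': "r' \<in> R" using x y xr yr by auto
  have eq: "Phi v1 v2 (a, b) r = Phi v1 v2 (a', b') r'" using eq0 xr yr by simp
  have "r' = lat_shift v1 v2 (a - a') (b - b') r"
  proof -
    have "lat_shift v1 v2 (- a') (- b') (Phi v1 v2 (a', b') r') = r'"
      unfolding Phi_def lat_shift_comp by (simp add: lat_shift_0)
    moreover have "lat_shift v1 v2 (- a') (- b') (Phi v1 v2 (a, b) r) = lat_shift v1 v2 (a - a') (b - b') r"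
      unfolding Phi_def lat_shift_comp by simp
    ultimately show ?thesis using eq by simp
  qed
  then have rr: "r' = r" using cr r r' unfolding complete_reps_def by blast
  then have "a = a' \<and> b = b'"
    using lat_inj[OF li eq[unfolded Phi_def]] by simp
  then show "x = y" using xr yr rr by simp
qed

lemma Phi_surj: "(\<lambda>(c, r). Phi v1 v2 c r) ` (UNIV \<times> R) = UNIV"
proof (intro set_eqI iffI)
  fix p :: zpt
  obtain r k1 k2 where "r \<in> R" "p = lat_shift v1 v2 k1 k2 r" using cr unfolding complete_reps_def by blast
  then show "p \<in> (\<lambda>(c, r). Phi v1 v2 c r) ` (UNIV \<times> R)"
    unfolding Phi_def by (intro image_eqI[of _ _ "((k1, k2), r)"]) auto
qed auto

lemma per_mem: "x \<in> V' \<Longrightarrow> lat_shift v1 v2 k1 k2 x \<in> V'"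
proof -
  assume "x \<in> V'"
  then have "lat_shift v1 v2 k1 k2 x \<in> lat_shift v1 v2 k1 k2 ` V'" by blast
  then show ?thesis using per unfolding periodic_wrt_def by metis
qed

lemma V_eq: "V' = (\<lambda>(c, r). Phi v1 v2 c r) ` (UNIV \<times> (V' \<inter> R))"
proof (intro set_eqI iffI)
  fix w assume w: "w \<in> V'"
  obtain r k1 k2 where r: "r \<in> R" and wr: "w = lat_shift v1 v2 k1 k2 r"
    using cr unfolding complete_reps_def by blast
  have "lat_shift v1 v2 (- k1) (- k2) w = r"
    unfolding wr lat_shift_comp by (simp add: lat_shift_0)
  then have "r \<in> V'" using per_mem[OF w, of "- k1" "- k2"] by simp
  then show "w \<in> (\<lambda>(c, r). Phi v1 v2 c r) ` (UNIV \<times> (V' \<inter> R))"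
    unfolding Phi_def using r wr by (intro image_eqI[of _ _ "((k1, k2), r)"]) auto
next
  fix w assume "w \<in> (\<lambda>(c, r). Phi v1 v2 c r) ` (UNIV \<times> (V' \<inter> R))"
  then show "w \<in> V'" unfolding Phi_def using per_mem by auto
qed

lemma Psi_inj: "inj_on (\<lambda>(c, rb). (Phi v1 v2 c (fst rb), snd rb)) (UNIV \<times> (R \<times> (UNIV :: bool set)))"
  using Phi_inj unfolding inj_on_def by auto

lemma Psi_surj: "(\<lambda>(c, rb). (Phi v1 v2 c (fst rb), snd rb)) ` (UNIV \<times> (R \<times> (UNIV :: bool set))) = UNIV"
proof (intro set_eqI iffI)
  fix e :: edge
  obtain c r where "r \<in> R" "fst e = Phi v1 v2 c r" using Phi_surj by (metis (no_types, lifting) UNIV_I imageE case_prod_conv mem_Sigma_iff prod.collapse)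
  then show "e \<in> (\<lambda>(c, rb). (Phi v1 v2 c (fst rb), snd rb)) ` (UNIV \<times> (R \<times> UNIV))"
    by (intro image_eqI[of _ _ "(c, (r, snd e))"]) (auto simp: prod_eq_iff)
qed auto

lemma V0_ne: "V' \<inter> R \<noteq> {}" if "V' \<noteq> {}"
  using V_eq that by auto

end

lemma int_pts_cell: "int_pts (cellQ0 R) = R"
proof (intro set_eqI iffI)
  fix p :: zpt assume "p \<in> R"
  then show "p \<in> int_pts (cellQ0 R)" unfolding int_pts_def cellQ0_def L1_def by auto
next
  fix p :: zpt assume "p \<in> int_pts (cellQ0 R)"
  then obtain r where r: "r \<in> R" and pr: "(of_int (fst p), of_int (snd p)) \<in> L1 r"
    unfolding int_pts_def cellQ0_def by auto
  have nz: False if "0 < t" "t < 1" "of_int a = of_int b + (t::real)" for a b :: int and t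
  proof -
    have "t = of_int (a - b)" using that by simp
    then have k: "0 < real_of_int (a - b)" "real_of_int (a - b) < 1" using that by simp_all
    then have "0 < a - b" "a - b < 1" by (simp_all only: of_int_0_less_iff of_int_less_1_iff)
    then show False by simp
  qed
  from pr consider "(of_int (fst p), of_int (snd p)) = ((of_int (fst r), of_int (snd r)) :: real \<times> real)"
    | t where "0 < t" "t < 1" "(of_int (fst p) :: real) = of_int (fst r) + t"
    | t where "0 < t" "t < 1" "(of_int (snd p) :: real) = of_int (snd r) + t"
    unfolding L1_def by auto
  then show "p \<in> R"
  proof cases
    case 1 then have "p = r" by (simp add: prod_eq_iff)
    then show ?thesis using r by simp
  next
    case 2 then show ?thesis using nz by blast
  next
    case 3 then show ?thesis using nz by blast
  qed
qed



lemma summable_on_diff_real: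
  fixes f g :: "'a \<Rightarrow> real"
  assumes "f summable_on A" "g summable_on A"
  shows "(\<lambda>x. f x - g x) summable_on A"
    and "infsum (\<lambda>x. f x - g x) A = infsum f A - infsum g A"
proof -
  have g': "(\<lambda>x. - g x) summable_on A" using summable_on_uminus assms(2) by blast
  have "(\<lambda>x. f x + - g x) summable_on A" by (rule summable_on_add[OF assms(1) g'])
  then show "(\<lambda>x. f x - g x) summable_on A" by simp
  have "infsum (\<lambda>x. f x + - g x) A = infsum f A + infsum (\<lambda>x. - g x) A"
    by (rule infsum_add[OF assms(1) g'])
  then show "infsum (\<lambda>x. f x - g x) A = infsum f A - infsum g A"
    by (simp add: infsum_uminus)
qed

lemma fin_sum_summable:
  fixes h :: "'k \<Rightarrow> 'a \<Rightarrow> real"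
  assumes "finite K" "\<And>k. k \<in> K \<Longrightarrow> h k summable_on A"
  shows "(\<lambda>c. \<Sum>k\<in>K. h k c) summable_on A \<and> infsum (\<lambda>c. \<Sum>k\<in>K. h k c) A = (\<Sum>k\<in>K. infsum (h k) A)"
  using assms
proof (induction K rule: finite_induct)
  case empty
  then show ?case by simp
next
  case (insert k K)
  have s1: "h k summable_on A" using insert by simp
  have s2: "(\<lambda>c. \<Sum>k\<in>K. h k c) summable_on A" and e2: "infsum (\<lambda>c. \<Sum>k\<in>K. h k c) A = (\<Sum>k\<in>K. infsum (h k) A)"
    using insert by auto
  have "(\<lambda>c. h k c + (\<Sum>k\<in>K. h k c)) summable_on A" by (rule summable_on_add[OF s1 s2])
  moreover have "infsum (\<lambda>c. h k c + (\<Sum>k\<in>K. h k c)) A = infsum (h k) A + (\<Sum>k\<in>K. infsum (h k) A)"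
    using infsum_add[OF s1 s2] e2 by simp
  ultimately show ?case using insert by simp
qed

lemma fin_sum_summable_le:
  fixes h :: "'k \<Rightarrow> 'a \<Rightarrow> real"
  assumes "finite K" "\<And>k. k \<in> K \<Longrightarrow> h k summable_on A" "\<And>k. k \<in> K \<Longrightarrow> infsum (h k) A \<le> M k"
  shows "(\<lambda>c. \<Sum>k\<in>K. h k c) summable_on A" "infsum (\<lambda>c. \<Sum>k\<in>K. h k c) A \<le> (\<Sum>k\<in>K. M k)"
  using fin_sum_summable[OF assms(1,2)] sum_mono[of K "\<lambda>k. infsum (h k) A" M] assms(3) by auto

lemma inj_comp_le:
  fixes h :: "'b \<Rightarrow> real"
  assumes hs: "h summable_on UNIV" and h0: "\<And>x. h x \<ge> 0" and f: "inj f"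
  shows "(\<lambda>c. h (f c)) summable_on UNIV" "infsum (\<lambda>c. h (f c)) UNIV \<le> infsum h UNIV"
proof -
  have s: "h summable_on (range f)" by (rule summable_on_subset[OF hs]) auto
  then show "(\<lambda>c. h (f c)) summable_on UNIV"
    using summable_on_reindex[of f UNIV h] f by (simp add: comp_def)
  have "infsum (\<lambda>c. h (f c)) UNIV = infsum h (range f)"
    using infsum_reindex[of f UNIV h] f by (simp add: comp_def)
  also have "\<dots> \<le> infsum h UNIV"
    by (rule infsum_mono_neutral[OF s hs]) (auto simp: h0)
  finally show "infsum (\<lambda>c. h (f c)) UNIV \<le> infsum h UNIV" .
qed

lemma reindex_sigma:
  fixes h :: "'b \<Rightarrow> real" and P :: "('c \<times> 'd) \<Rightarrow> 'b"
  assumes inj: "inj_on P (UNIV \<times> B)" and fin: "finite B" and hs: "h summable_on (P ` (UNIV \<times> B))"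
  shows "infsum h (P ` (UNIV \<times> B)) = infsum (\<lambda>c. \<Sum>r\<in>B. h (P (c, r))) UNIV"
    and "(\<lambda>c. \<Sum>r\<in>B. h (P (c, r))) summable_on UNIV"
proof -
  have s: "(h \<circ> P) summable_on (UNIV \<times> B)" using hs summable_on_reindex[OF inj, of h] by blast
  have "infsum h (P ` (UNIV \<times> B)) = infsum (h \<circ> P) (UNIV \<times> B)" by (rule infsum_reindex[OF inj])
  also have "\<dots> = infsum (\<lambda>c. infsum (\<lambda>r. (h \<circ> P) (c, r)) B) UNIV"
    using infsum_Sigma_banach[of "h \<circ> P" UNIV "\<lambda>_. B"] s by simp
  also have "\<dots> = infsum (\<lambda>c. \<Sum>r\<in>B. h (P (c, r))) UNIV" using fin by simp
  finally show "infsum h (P ` (UNIV \<times> B)) = infsum (\<lambda>c. \<Sum>r\<in>B. h (P (c, r))) UNIV" .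
  have "(\<lambda>c. infsum (\<lambda>r. (h \<circ> P) (c, r)) B) summable_on UNIV"
    using summable_on_SigmaD[of "h \<circ> P" UNIV "\<lambda>_. B"] s fin by simp
  then show "(\<lambda>c. \<Sum>r\<in>B. h (P (c, r))) summable_on UNIV" using fin by simp
qed



theorem lemma2p2:
  fixes q :: real and V' :: "zpt set" and v1 v2 :: zpt and R :: "zpt set"
  assumes "q \<ge> 2"
    and "V' \<noteq> {}"
    and "periodic_wrt V' v1 v2"
    and "complete_reps v1 v2 R"
  shows "\<exists>C>0. \<forall>eps>0. \<forall>u g. H1_graph eps u g \<longrightarrow>
     \<bar>eps * (2 * real (card (int_pts (cellQ0 R))) / real (card (V' \<inter> int_pts (cellQ0 R))))
           * infsum (\<lambda>v. \<bar>u (vertex_pt eps v)\<bar> powr q) V'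
        - Lpow eps u q\<bar>
     \<le> C * eps * (Lpow eps u (2 * (q - 1))) powr (1/2) * sqrt (deriv_L2sq eps g)"
proof -
  note q = assms(1) and per = assms(3) and cr = assms(4)
  define V0 where "V0 = V' \<inter> R"
  define m where "m = card V0"
  define RB where "RB = R \<times> (UNIV :: bool set)"
  have finR: "finite R" by (rule finR[OF per cr])
  have finV0: "finite V0" unfolding V0_def using finR by simp
  have finRB: "finite RB" unfolding RB_def using finR by simp
  have V0R: "V0 \<subseteq> R" unfolding V0_def by simp
  have m0: "m > 0" unfolding m_def using V0_ne[OF per cr assms(2)] finV0 V0_def
    by (simp add: card_gt_0_iff)
  have cRB: "card RB = 2 * card R" unfolding RB_def by (simp add: card_cartesian_product)
  define I where "I = (\<lambda>(x::zpt) (y::zpt). {min (fst x) (fst y)..<max (fst x) (fst y)})"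
  define J where "J = (\<lambda>(x::zpt) (y::zpt). {min (snd x) (snd y)..<max (snd x) (snd y)})"
  define K where "K = (\<lambda>(r'::zpt) (rb::zpt \<times> bool). real (card (I r' (fst rb))) + real (card (J r' (fst rb))) + 1)"
  define C0 where "C0 = q / real m * (\<Sum>r'\<in>V0. \<Sum>rb\<in>RB. K r' rb)"
  have K0: "K r' rb \<ge> 0" for r' rb unfolding K_def by simp
  have C0: "C0 \<ge> 0" unfolding C0_def using q m0 K0 by (intro mult_nonneg_nonneg sum_nonneg) auto
  show ?thesis
  proof (intro exI[of _ "C0 + 1"] conjI allI impI)
    show "C0 + 1 > 0" using C0 by simp
    fix eps :: real and u g
    assume eps: "eps > 0" and H: "H1_graph eps u g"
    define P where "P = (\<lambda>(c, r). Phi v1 v2 c r)"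
    define Q :: "(int \<times> int) \<times> (zpt \<times> bool) \<Rightarrow> edge" where "Q = (\<lambda>(c, rb). (Phi v1 v2 c (fst rb), snd rb))"
    define ac where "ac = (\<lambda>c. fst (Phi v1 v2 c (0, 0)))"
    define bc where "bc = (\<lambda>c. snd (Phi v1 v2 c (0, 0)))"
    have Phi_ab: "Phi v1 v2 c r = (fst r + ac c, snd r + bc c)" for c r
      unfolding ac_def bc_def by (rule Phi_eq)
    define F where "F = Fv eps u q"
    define vc where "vc = (\<lambda>c. \<Sum>r\<in>V0. F (Phi v1 v2 c r))"
    define zc where "zc = (\<lambda>c. \<Sum>rb\<in>RB. Ze eps u q (Phi v1 v2 c (fst rb), snd rb))"
    define kp where "kp = 2 * real (card R) / real m"
    define S where "S = infsum (Ae eps u g q) UNIV"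
    define X where "X = infsum (Ze eps u (2 * (q - 1))) UNIV"
    define Y where "Y = infsum (Ye eps g) UNIV"
    have FV: "(\<lambda>v. \<bar>u (vertex_pt eps v)\<bar> powr q) = F" by (simp add: F_def Fv_def fun_eq_iff)
    have VP: "V' = P ` (UNIV \<times> V0)" unfolding P_def V0_def by (rule V_eq[OF per cr])
    have injP: "inj_on P (UNIV \<times> V0)"
      unfolding P_def by (rule inj_on_subset[OF Phi_inj[OF per cr]]) (use V0R in auto)
    have Fs: "F summable_on (P ` (UNIV \<times> V0))" unfolding F_def Fv_def
      using sum_vert[OF eps H q, of V'] VP by simp
    have T: "infsum F V' = infsum vc UNIV" and vcs: "vc summable_on UNIV"
      using reindex_sigma[OF injP finV0 Fs] VP unfolding vc_def P_def by auto
    have injQ: "inj_on Q (UNIV \<times> RB)" unfolding Q_def RB_def by (rule Psi_inj[OF per cr])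
    have QU: "Q ` (UNIV \<times> RB) = UNIV" unfolding Q_def RB_def by (rule Psi_surj[OF per cr])
    have Zs: "Ze eps u q summable_on (Q ` (UNIV \<times> RB))" unfolding QU by (rule sum_Ze[OF eps H q])
    have L: "infsum (Ze eps u q) UNIV = infsum zc UNIV" and zcs: "zc summable_on UNIV"
      using reindex_sigma[OF injQ finRB Zs] QU unfolding zc_def Q_def by auto
    define dc where "dc = (\<lambda>c. eps * kp * vc c - zc c)"
    have vcs': "(\<lambda>c. eps * kp * vc c) summable_on UNIV" by (intro summable_on_cmult_right vcs)
    have dcs: "dc summable_on UNIV" and dcsum: "infsum dc UNIV = eps * kp * infsum F V' - infsum (Ze eps u q) UNIV"
      using summable_on_diff_real[OF vcs' zcs] unfolding dc_def T L infsum_cmult_right[OF vcs] by auto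
    define bnd where "bnd = (\<lambda>c. eps * q / real m * (\<Sum>r'\<in>V0. \<Sum>rb\<in>RB.
        (Dp eps u g q (ac c) (bc c) r' (fst rb) + Ae eps u g q (Phi v1 v2 c (fst rb), snd rb))))"
    have dcb: "\<bar>dc c\<bar> \<le> bnd c" for c
    proof -
      define A where "A = (\<lambda>r'. eps * F (Phi v1 v2 c r'))"
      define B where "B = (\<lambda>rb. Ze eps u q (Phi v1 v2 c (fst rb), snd rb))"
      have "(\<Sum>r'\<in>V0. \<Sum>rb\<in>RB. (A r' - B rb)) = (\<Sum>r'\<in>V0. real (card RB) * A r' - zc c)"
        unfolding zc_def B_def by (simp add: sum_subtractf)
      also have "\<dots> = real (card RB) * (\<Sum>r'\<in>V0. A r') - real m * zc c"
        unfolding m_def by (simp add: sum_subtractf sum_distrib_left)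
      also have "\<dots> = real m * dc c"
        unfolding dc_def kp_def vc_def A_def cRB using m0 by (simp add: sum_distrib_left field_simps)
      finally have eqd: "dc c = (\<Sum>r'\<in>V0. \<Sum>rb\<in>RB. (A r' - B rb)) / real m" using m0 by simp
      have each: "\<bar>A r' - B rb\<bar> \<le> eps * q * (Dp eps u g q (ac c) (bc c) r' (fst rb) + Ae eps u g q (Phi v1 v2 c (fst rb), snd rb))" for r' rb
        unfolding A_def B_def F_def Phi_ab by (rule ve_bound[OF eps H q])
      have "\<bar>\<Sum>r'\<in>V0. \<Sum>rb\<in>RB. (A r' - B rb)\<bar> \<le> (\<Sum>r'\<in>V0. \<Sum>rb\<in>RB. \<bar>A r' - B rb\<bar>)"
        by (rule order_trans[OF sum_abs sum_mono[OF sum_abs]])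
      also have "\<dots> \<le> (\<Sum>r'\<in>V0. \<Sum>rb\<in>RB. eps * q * (Dp eps u g q (ac c) (bc c) r' (fst rb) + Ae eps u g q (Phi v1 v2 c (fst rb), snd rb)))"
        by (intro sum_mono each)
      finally have "\<bar>dc c\<bar> \<le> (\<Sum>r'\<in>V0. \<Sum>rb\<in>RB. eps * q * (Dp eps u g q (ac c) (bc c) r' (fst rb) + Ae eps u g q (Phi v1 v2 c (fst rb), snd rb))) / real m"
        unfolding eqd using m0 by (simp add: divide_right_mono)
      also have "\<dots> = bnd c" unfolding bnd_def by (simp add: sum_distrib_left[symmetric] mult.assoc)
      finally show ?thesis .
    qed
    have Ae0: "\<And>e. Ae eps u g q e \<ge> 0" by (rule e_Ae_nonneg[OF eps H q])
    have atom: "(\<lambda>c. Ae eps u g q ((i + ac c, k + bc c), bb)) summable_on UNIV \<and>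
                infsum (\<lambda>c. Ae eps u g q ((i + ac c, k + bc c), bb)) UNIV \<le> S" for i k bb
    proof -
      have e: "(\<lambda>c. Ae eps u g q ((i + ac c, k + bc c), bb)) = (\<lambda>c. Ae eps u g q ((\<lambda>c. (Phi v1 v2 c (i, k), bb)) c))"
        by (simp add: Phi_ab)
      have inj: "inj (\<lambda>c. (Phi v1 v2 c (i, k), bb))"
        using Phi_inj1[OF li[OF per cr], of "(i, k)"] unfolding inj_def by auto
      show ?thesis unfolding e S_def using inj_comp_le[OF sum_Ae[OF eps H q] Ae0 inj] by auto
    qed
    define tm where "tm = (\<lambda>r' rb c. Dp eps u g q (ac c) (bc c) r' (fst rb) + Ae eps u g q (Phi v1 v2 c (fst rb), snd rb))"
    have tm_le: "tm r' rb summable_on UNIV \<and> infsum (tm r' rb) UNIV \<le> K r' rb * S" for r' rb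
    proof -
      define h1 where "h1 = (\<lambda>c. \<Sum>i\<in>I r' (fst rb). Ae eps u g q ((i + ac c, snd r' + bc c), True))"
      define h2 where "h2 = (\<lambda>c. \<Sum>j\<in>J r' (fst rb). Ae eps u g q ((fst (fst rb) + ac c, j + bc c), False))"
      define h3 where "h3 = (\<lambda>c. Ae eps u g q (Phi v1 v2 c (fst rb), snd rb))"
      have s1: "h1 summable_on UNIV" "infsum h1 UNIV \<le> (\<Sum>i\<in>I r' (fst rb). S)"
        unfolding h1_def using fin_sum_summable_le[of "I r' (fst rb)" "\<lambda>i c. Ae eps u g q ((i + ac c, snd r' + bc c), True)" UNIV "\<lambda>_. S"] atom
        by (auto simp: I_def)
      have s2: "h2 summable_on UNIV" "infsum h2 UNIV \<le> (\<Sum>j\<in>J r' (fst rb). S)"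
        unfolding h2_def using fin_sum_summable_le[of "J r' (fst rb)" "\<lambda>j c. Ae eps u g q ((fst (fst rb) + ac c, j + bc c), False)" UNIV "\<lambda>_. S"] atom
        by (auto simp: J_def)
      have s3: "h3 summable_on UNIV" "infsum h3 UNIV \<le> S"
        unfolding h3_def using atom[of "fst (fst rb)" "snd (fst rb)" "snd rb"] by (simp_all add: Phi_ab)
      have tme: "tm r' rb = (\<lambda>c. h1 c + h2 c + h3 c)"
        unfolding tm_def h1_def h2_def h3_def Dp_def I_def J_def by (simp add: fun_eq_iff)
      have s12: "(\<lambda>c. h1 c + h2 c) summable_on UNIV" by (rule summable_on_add[OF s1(1) s2(1)])
      show ?thesis
      proof
        show "tm r' rb summable_on UNIV" unfolding tme by (rule summable_on_add[OF s12 s3(1)])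
        have "infsum (tm r' rb) UNIV = infsum h1 UNIV + infsum h2 UNIV + infsum h3 UNIV"
          unfolding tme infsum_add[OF s12 s3(1)] infsum_add[OF s1(1) s2(1)] ..
        also have "\<dots> \<le> (\<Sum>i\<in>I r' (fst rb). S) + (\<Sum>j\<in>J r' (fst rb). S) + S"
          using s1(2) s2(2) s3(2) by linarith
        also have "\<dots> = K r' rb * S" unfolding K_def by (simp add: algebra_simps)
        finally show "infsum (tm r' rb) UNIV \<le> K r' rb * S" .
      qed
    qed
    have in1: "(\<lambda>c. \<Sum>rb\<in>RB. tm r' rb c) summable_on UNIV \<and> infsum (\<lambda>c. \<Sum>rb\<in>RB. tm r' rb c) UNIV \<le> (\<Sum>rb\<in>RB. K r' rb * S)" for r'
      using fin_sum_summable_le[OF finRB, of "tm r'" UNIV "\<lambda>rb. K r' rb * S"] tm_le by auto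
    have in2: "(\<lambda>c. \<Sum>r'\<in>V0. \<Sum>rb\<in>RB. tm r' rb c) summable_on UNIV"
          "infsum (\<lambda>c. \<Sum>r'\<in>V0. \<Sum>rb\<in>RB. tm r' rb c) UNIV \<le> (\<Sum>r'\<in>V0. \<Sum>rb\<in>RB. K r' rb * S)"
      using fin_sum_summable_le[OF finV0, of "\<lambda>r' c. \<Sum>rb\<in>RB. tm r' rb c" UNIV "\<lambda>r'. \<Sum>rb\<in>RB. K r' rb * S"] in1 by auto
    have bnde: "bnd = (\<lambda>c. (eps * q / real m) * (\<Sum>r'\<in>V0. \<Sum>rb\<in>RB. tm r' rb c))"
      unfolding bnd_def tm_def ..
    have bnds: "bnd summable_on UNIV" unfolding bnde by (intro summable_on_cmult_right in2(1))
    have fq: "eps * q / real m \<ge> 0" using eps q m0 by simp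
    have "infsum bnd UNIV = (eps * q / real m) * infsum (\<lambda>c. \<Sum>r'\<in>V0. \<Sum>rb\<in>RB. tm r' rb c) UNIV"
      unfolding bnde by (rule infsum_cmult_right[OF in2(1)])
    also have "\<dots> \<le> (eps * q / real m) * (\<Sum>r'\<in>V0. \<Sum>rb\<in>RB. K r' rb * S)"
      by (rule mult_left_mono[OF in2(2) fq])
    also have "\<dots> = eps * C0 * S" unfolding C0_def by (simp add: sum_distrib_right[symmetric])
    finally have bndsum: "infsum bnd UNIV \<le> eps * C0 * S" .
    have up: "infsum dc UNIV \<le> infsum bnd UNIV"
      by (rule infsum_mono[OF dcs bnds]) (use dcb in \<open>auto simp: abs_le_iff\<close>)
    have lo: "- infsum bnd UNIV \<le> infsum dc UNIV"
    proof -
      have "infsum (\<lambda>c. - bnd c) UNIV \<le> infsum dc UNIV"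
      proof (rule infsum_mono[OF summable_on_uminus[THEN iffD2, OF bnds] dcs])
        fix c show "- bnd c \<le> dc c" using dcb[of c] by linarith
      qed
      then show ?thesis by (simp add: infsum_uminus)
    qed
    have S0: "S \<ge> 0" unfolding S_def using Ae0 by (intro infsum_nonneg) auto
    have X0: "X \<ge> 0" unfolding X_def using e_Ze_nonneg[OF eps H, of "2 * (q - 1)"] q by (intro infsum_nonneg) auto
    have Y0: "Y \<ge> 0" unfolding Y_def using e_Ye_nonneg[OF eps H] by (intro infsum_nonneg) auto
    have SXY: "S \<le> sqrt X * sqrt Y" unfolding S_def X_def Y_def by (rule S_le[OF eps H q])
    have "\<bar>infsum dc UNIV\<bar> \<le> eps * C0 * S" using up lo bndsum by linarith
    also have "\<dots> \<le> eps * C0 * (sqrt X * sqrt Y)" using eps C0 SXY by (intro mult_left_mono) auto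
    also have "\<dots> \<le> (C0 + 1) * eps * (sqrt X * sqrt Y)"
      using eps C0 X0 Y0 by (intro mult_right_mono) (auto simp: algebra_simps)
    finally have fin: "\<bar>infsum dc UNIV\<bar> \<le> (C0 + 1) * eps * sqrt X * sqrt Y" by (simp add: mult.assoc)
    have kpe: "2 * real (card (int_pts (cellQ0 R))) / real (card (V' \<inter> int_pts (cellQ0 R))) = kp"
      unfolding int_pts_cell kp_def m_def V0_def ..
    show "\<bar>eps * (2 * real (card (int_pts (cellQ0 R))) / real (card (V' \<inter> int_pts (cellQ0 R))))
           * infsum (\<lambda>v. \<bar>u (vertex_pt eps v)\<bar> powr q) V'
        - Lpow eps u q\<bar>
     \<le> (C0 + 1) * eps * (Lpow eps u (2 * (q - 1))) powr (1/2) * sqrt (deriv_L2sq eps g)"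
      unfolding kpe FV Lpow_Ze deriv_Ye powr_half_sqrt[OF X0[unfolded X_def]]
      using fin unfolding dcsum X_def Y_def .
  qed
qed


end
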